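(* Let $x\in V(D^+)\setminus\{s\}$. For any $y\in C(x)$, $I_s(x)\preceq I_s(y)$.
   Context: $G=(V,E,w)$ is a simple, connected, undirected graph with positive edge lengths, $s,t\in V$. $D$ is the union of all shortest $st$-paths of $G$, and $D^+$ is the directed acyclic graph obtained from $D$ by orienting every edge toward $t$. For $x,y\in V(D^+)$, $x\prec y$ means $x$ is an ancestor of $y$ in $D^+$ (a directed path of positive length from $x$ to $y$ exists), and $x\preceq y$ means $x\prec y$ or $x=y$. For $x\neq s$, $v\neq x$ is an $s$-dominator of $x$ if every directed path from $s$ to $x$ in $D^+$ contains $v$, and $I_s(x)$ is the $s$-dominator of $x$ closest to $x$ (every other $s$-dominator of $x$ is an $s$-dominator of $I_s(x)$). For $x\neq s$, $C(x)=\{v\in V(D^+): I_s(x)\prec v\prec x\}$. *)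

theory Defs
  imports Complex_Main
begin

definition simple_graph :: "'a set \<Rightarrow> 'a set set \<Rightarrow> bool" where
  "simple_graph V E \<longleftrightarrow> finite V \<and> (\<forall>e\<in>E. e \<subseteq> V \<and> card e = 2)"

definition is_path :: "'a set \<Rightarrow> 'a set set \<Rightarrow> 'a list \<Rightarrow> bool" where
  "is_path V E xs \<longleftrightarrow> xs \<noteq> [] \<and> distinct xs \<and> set xs \<subseteq> V \<and>
     (\<forall>i. Suc i < length xs \<longrightarrow> {xs ! i, xs ! Suc i} \<in> E)"

definition connected_graph :: "'a set \<Rightarrow> 'a set set \<Rightarrow> bool" where
  "connected_graph V E \<longleftrightarrow>
     (\<forall>u\<in>V. \<forall>v\<in>V. \<exists>xs. is_path V E xs \<and> hd xs = u \<and> last xs = v)"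

definition path_len :: "('a set \<Rightarrow> real) \<Rightarrow> 'a list \<Rightarrow> real" where
  "path_len w xs = (\<Sum>i<length xs - 1. w {xs ! i, xs ! Suc i})"

definition shortest_path :: "'a set \<Rightarrow> 'a set set \<Rightarrow> ('a set \<Rightarrow> real) \<Rightarrow> 'a \<Rightarrow> 'a \<Rightarrow> 'a list \<Rightarrow> bool" where
  "shortest_path V E w s t xs \<longleftrightarrow> is_path V E xs \<and> hd xs = s \<and> last xs = t \<and>
     (\<forall>ys. is_path V E ys \<and> hd ys = s \<and> last ys = t \<longrightarrow> path_len w xs \<le> path_len w ys)"

definition DV :: "'a set \<Rightarrow> 'a set set \<Rightarrow> ('a set \<Rightarrow> real) \<Rightarrow> 'a \<Rightarrow> 'a \<Rightarrow> 'a set" where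
  "DV V E w s t = (\<Union>{set xs | xs. shortest_path V E w s t xs})"

text \<open>Arcs of D+: each edge of a shortest st-path, oriented in the direction of traversal
  from s towards t.\<close>
definition Darcs :: "'a set \<Rightarrow> 'a set set \<Rightarrow> ('a set \<Rightarrow> real) \<Rightarrow> 'a \<Rightarrow> 'a \<Rightarrow> ('a \<times> 'a) set" where
  "Darcs V E w s t = {(xs ! i, xs ! Suc i) | xs i. shortest_path V E w s t xs \<and> Suc i < length xs}"

definition anc :: "'a set \<Rightarrow> 'a set set \<Rightarrow> ('a set \<Rightarrow> real) \<Rightarrow> 'a \<Rightarrow> 'a \<Rightarrow> 'a \<Rightarrow> 'a \<Rightarrow> bool" where
  "anc V E w s t x y \<longleftrightarrow> (x, y) \<in> (Darcs V E w s t)\<^sup>+"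

definition anc_eq :: "'a set \<Rightarrow> 'a set set \<Rightarrow> ('a set \<Rightarrow> real) \<Rightarrow> 'a \<Rightarrow> 'a \<Rightarrow> 'a \<Rightarrow> 'a \<Rightarrow> bool" where
  "anc_eq V E w s t x y \<longleftrightarrow> anc V E w s t x y \<or> x = y"

definition dpath :: "'a set \<Rightarrow> 'a set set \<Rightarrow> ('a set \<Rightarrow> real) \<Rightarrow> 'a \<Rightarrow> 'a \<Rightarrow> 'a list \<Rightarrow> bool" where
  "dpath V E w s t ps \<longleftrightarrow> ps \<noteq> [] \<and> set ps \<subseteq> DV V E w s t \<and>
     (\<forall>i. Suc i < length ps \<longrightarrow> (ps ! i, ps ! Suc i) \<in> Darcs V E w s t)"

definition sdom :: "'a set \<Rightarrow> 'a set set \<Rightarrow> ('a set \<Rightarrow> real) \<Rightarrow> 'a \<Rightarrow> 'a \<Rightarrow> 'a \<Rightarrow> 'a \<Rightarrow> bool" where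
  "sdom V E w s t v x \<longleftrightarrow> v \<noteq> x \<and>
     (\<forall>ps. dpath V E w s t ps \<and> hd ps = s \<and> last ps = x \<longrightarrow> v \<in> set ps)"

definition Is :: "'a set \<Rightarrow> 'a set set \<Rightarrow> ('a set \<Rightarrow> real) \<Rightarrow> 'a \<Rightarrow> 'a \<Rightarrow> 'a \<Rightarrow> 'a" where
  "Is V E w s t x = (THE v. sdom V E w s t v x \<and>
      (\<forall>u. sdom V E w s t u x \<and> u \<noteq> v \<longrightarrow> sdom V E w s t u v))"

definition Cset :: "'a set \<Rightarrow> 'a set set \<Rightarrow> ('a set \<Rightarrow> real) \<Rightarrow> 'a \<Rightarrow> 'a \<Rightarrow> 'a \<Rightarrow> 'a set" where
  "Cset V E w s t x = {v \<in> DV V E w s t. anc V E w s t (Is V E w s t x) v \<and> anc V E w s t v x}"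

end

theory Submission imports Defs begin

lemma succ_nth: "successively P xs \<longleftrightarrow> (\<forall>i. Suc i < length xs \<longrightarrow> P (xs!i) (xs!Suc i))"
proof (induction P xs rule: successively.induct)
  case (3 P x y xs)
  show ?case
  proof
    assume "successively P (x # y # xs)"
    then show "\<forall>i. Suc i < length (x # y # xs) \<longrightarrow> P ((x # y # xs) ! i) ((x # y # xs) ! Suc i)"
      using 3 by (auto simp: nth_Cons split: nat.splits)
  next
    assume h: "\<forall>i. Suc i < length (x # y # xs) \<longrightarrow> P ((x # y # xs) ! i) ((x # y # xs) ! Suc i)"
    have "P x y" using h[rule_format, of 0] by simp
    moreover have "\<forall>i. Suc i < length (y # xs) \<longrightarrow> P ((y # xs) ! i) ((y # xs) ! Suc i)"
      using h by (metis Suc_less_eq length_Cons nth_Cons_Suc)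
    ultimately show "successively P (x # y # xs)" using 3 by simp
  qed
qed auto

fun wl :: "('a set \<Rightarrow> real) \<Rightarrow> 'a list \<Rightarrow> real" where
  "wl w (a # b # xs) = w {a, b} + wl w (b # xs)"
| "wl w _ = 0"

lemma path_len_wl: "path_len w xs = wl w xs"
proof (induction w xs rule: wl.induct)
  case (1 w a b xs)
  have "path_len w (a # b # xs) = (\<Sum>i<Suc (length xs). w {(a#b#xs) ! i, (a#b#xs) ! Suc i})"
    by (simp add: path_len_def)
  also have "\<dots> = w {a,b} + (\<Sum>i<length xs. w {(b#xs) ! i, (b#xs) ! Suc i})"
    by (subst sum.lessThan_Suc_shift) simp
  also have "\<dots> = w {a,b} + path_len w (b#xs)" by (simp add: path_len_def)
  finally show ?case using 1 by simp
qed (auto simp: path_len_def)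

lemma wl_append: "wl w (xs @ y # ys) = wl w (xs @ [y]) + wl w (y # ys)"
  by (induction xs rule: induct_list012) auto

lemma wl_nonneg: "\<forall>e\<in>E. w e > 0 \<Longrightarrow> successively (\<lambda>a b. {a,b} \<in> E) xs \<Longrightarrow> wl w xs \<ge> 0"
proof (induction xs rule: induct_list012)
  case (3 x y zs)
  then show ?case by (simp add: add_nonneg_nonneg less_imp_le)
qed auto

lemma succ_pre: "successively P (xs @ y # ys) \<Longrightarrow> successively P (xs @ [y])"
  by (induction xs rule: induct_list012) (auto simp: successively_Cons)

lemma succ_suf: "successively P (xs @ y # ys) \<Longrightarrow> successively P (y # ys)"
  by (induction xs rule: induct_list012) (auto simp: successively_Cons)

lemma succ_join: "successively P (xs @ [y]) \<Longrightarrow> successively P (y # ys) \<Longrightarrow> successively P (xs @ y # ys)"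
  by (induction xs rule: induct_list012) (auto simp: successively_Cons)

lemma shortcut:
  assumes pos: "\<forall>e\<in>E. w e > 0"
  shows "xs \<noteq> [] \<Longrightarrow> set xs \<subseteq> V \<Longrightarrow> successively (\<lambda>a b. {a,b} \<in> E) xs \<Longrightarrow>
    \<exists>ys. is_path V E ys \<and> hd ys = hd xs \<and> last ys = last xs \<and> wl w ys \<le> wl w xs"
proof (induction xs rule: length_induct)
  case (1 xs)
  show ?case
  proof (cases "distinct xs")
    case True
    then show ?thesis using 1(2-4) by (intro exI[of _ xs]) (auto simp: is_path_def succ_nth)
  next
    case False
    then obtain as u bs cs where xs: "xs = as @ [u] @ bs @ [u] @ cs"
      using not_distinct_decomp by blast
    define xs' where "xs' = as @ u # cs"
    have len: "length xs' < length xs" by (simp add: xs xs'_def)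
    have S: "successively (\<lambda>a b. {a,b} \<in> E) (as @ u # bs @ u # cs)" using 1(4) xs by simp
    have S1: "successively (\<lambda>a b. {a,b} \<in> E) (as @ [u])" using succ_pre[OF S] .
    have S0: "successively (\<lambda>a b. {a,b} \<in> E) ((u # bs) @ u # cs)" using succ_suf[OF S] by simp
    have S2: "successively (\<lambda>a b. {a,b} \<in> E) (u # bs @ [u])" using succ_pre[OF S0] by simp
    have S3: "successively (\<lambda>a b. {a,b} \<in> E) (u # cs)" using succ_suf[OF S0] .
    have S': "successively (\<lambda>a b. {a,b} \<in> E) xs'"
      using succ_join[OF S1 S3] unfolding xs'_def .
    have "xs' \<noteq> []" "set xs' \<subseteq> V" using 1(3) by (auto simp: xs xs'_def)
    from 1(1)[rule_format, OF len this S'] obtain ys where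
      ys: "is_path V E ys" "hd ys = hd xs'" "last ys = last xs'" "wl w ys \<le> wl w xs'" by blast
    have "hd xs' = hd xs" by (cases as) (simp_all add: xs xs'_def)
    have "last xs' = last xs" by (cases cs) (simp_all add: xs xs'_def)
    moreover have "wl w xs' \<le> wl w xs"
    proof -
      have "wl w xs = wl w (as @ [u]) + wl w (u # bs @ u # cs)"
        unfolding xs using wl_append[of w as u "bs @ u # cs"] by simp
      also have "wl w (u # bs @ u # cs) = wl w (u # bs @ [u]) + wl w (u # cs)"
        using wl_append[of w "u # bs" u cs] by simp
      finally have "wl w xs = wl w (as @ [u]) + wl w (u # bs @ [u]) + wl w (u # cs)" by simp
      moreover have "wl w xs' = wl w (as @ [u]) + wl w (u # cs)"
        unfolding xs'_def using wl_append[of w as u cs] by simp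
      moreover have "wl w (u # bs @ [u]) \<ge> 0" using wl_nonneg[OF pos S2] .
      ultimately show ?thesis by simp
    qed
    ultimately show ?thesis using ys \<open>hd xs' = hd xs\<close> by (metis order_trans)
  qed
qed

lemma succ_take: "successively P xs \<Longrightarrow> successively P (take n xs)"
  by (auto simp: succ_nth)

lemma succ_drop: "successively P xs \<Longrightarrow> successively P (drop n xs)"
  by (auto simp: succ_nth add.commute)

lemma path_succ: "is_path V E xs \<Longrightarrow> successively (\<lambda>a b. {a,b} \<in> E) xs"
  by (simp add: is_path_def succ_nth)

definition gp :: "('a \<times> 'a) set \<Rightarrow> 'a set \<Rightarrow> 'a list \<Rightarrow> bool" where
  "gp A D ps \<longleftrightarrow> ps \<noteq> [] \<and> set ps \<subseteq> D \<and> successively (\<lambda>a b. (a,b) \<in> A) ps"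

definition gdom :: "('a \<times> 'a) set \<Rightarrow> 'a set \<Rightarrow> 'a \<Rightarrow> 'a \<Rightarrow> 'a \<Rightarrow> bool" where
  "gdom A D s v x \<longleftrightarrow> v \<noteq> x \<and> (\<forall>ps. gp A D ps \<and> hd ps = s \<and> last ps = x \<longrightarrow> v \<in> set ps)"

lemma G1:
  assumes "(u,v) \<in> A\<^sup>+" "A \<subseteq> D \<times> D"
  shows "\<exists>R. gp A D R \<and> hd R = u \<and> last R = v \<and> length R \<ge> 2"
  using assms(1)
proof (induction rule: trancl_induct)
  case (base y)
  then show ?case using assms(2) by (intro exI[of _ "[u,y]"]) (auto simp: gp_def)
next
  case (step y z)
  then obtain R where R: "gp A D R" "hd R = u" "last R = y" "length R \<ge> 2" by blast
  have "gp A D (R @ [z])" using R step(2) assms(2) unfolding gp_def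
    by (auto simp: successively_append_iff)
  moreover have "hd (R @ [z]) = u" using R unfolding gp_def by simp
  ultimately show ?case using R by (intro exI[of _ "R @ [z]"]) auto
qed

lemma G2:
  assumes "gp A D R" "i < j" "j < length R"
  shows "(R ! i, R ! j) \<in> A\<^sup>+"
  using assms(2,3)
proof (induction j)
  case 0 then show ?case by simp
next
  case (Suc j)
  have arc: "(R ! j, R ! Suc j) \<in> A"
    using assms(1) Suc.prems unfolding gp_def succ_nth by blast
  show ?case
  proof (cases "i = j")
    case True then show ?thesis using arc by auto
  next
    case False
    then have "(R ! i, R ! j) \<in> A\<^sup>+" using Suc by auto
    then show ?thesis using arc by auto
  qed
qed

lemma G3:
  assumes "gp A D P" "k < length P"
  shows "gp A D (take (Suc k) P)" "hd (take (Suc k) P) = hd P" "last (take (Suc k) P) = P ! k"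
    "gp A D (drop k P)" "hd (drop k P) = P ! k" "last (drop k P) = last P"
proof -
  show "gp A D (take (Suc k) P)" using assms unfolding gp_def
    using set_take_subset[of "Suc k" P] succ_take[of _ P "Suc k"] by auto
  show "hd (take (Suc k) P) = hd P" by simp
  show "last (take (Suc k) P) = P ! k" using assms(2) by (simp add: take_Suc_conv_app_nth)
  show "gp A D (drop k P)" using assms unfolding gp_def
    using set_drop_subset[of k P] succ_drop[of _ P k] by auto
  show "hd (drop k P) = P ! k" using assms(2) by (simp add: hd_drop_conv_nth)
  show "last (drop k P) = last P" using assms(2) by simp
qed

lemma G4:
  assumes "gp A D P" "gp A D Q" "last P = hd Q"
  shows "gp A D (P @ tl Q)" "hd (P @ tl Q) = hd P" "last (P @ tl Q) = last Q"
proof -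
  have P: "P = butlast P @ [last P]" and Q: "Q = hd Q # tl Q" using assms unfolding gp_def
    by (metis append_butlast_last_id, metis list.collapse)
  have "successively (\<lambda>a b. (a,b) \<in> A) (butlast P @ [last P])"
    using assms(1) P unfolding gp_def by metis
  moreover have "successively (\<lambda>a b. (a,b) \<in> A) (last P # tl Q)"
    using assms(2,3) Q unfolding gp_def by metis
  ultimately have "successively (\<lambda>a b. (a,b) \<in> A) (butlast P @ last P # tl Q)" by (rule succ_join)
  hence "successively (\<lambda>a b. (a,b) \<in> A) (P @ tl Q)" using P by (metis append.assoc append_Cons append_Nil)
  moreover have "set (P @ tl Q) \<subseteq> D" using assms unfolding gp_def
    by (auto dest: list.set_sel(2))
  ultimately show "gp A D (P @ tl Q)" using assms(1) unfolding gp_def by simp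
  show "hd (P @ tl Q) = hd P" using assms unfolding gp_def by simp
  show "last (P @ tl Q) = last Q"
  proof (cases "tl Q = []")
    case True then show ?thesis using assms Q by (metis append_Nil2 last_ConsL)
  next
    case False then show ?thesis using Q by (metis last_ConsR last_append)
  qed
qed

lemma gdom_reach:
  assumes "gdom A D s v x" "gp A D P" "hd P = s" "last P = x"
  shows "\<exists>P'. gp A D P' \<and> hd P' = s \<and> last P' = v"
proof -
  have "v \<in> set P" using assms unfolding gdom_def by blast
  then obtain k where k: "k < length P" "P ! k = v" by (metis in_set_conv_nth)
  show ?thesis using G3[OF assms(2) k(1)] k assms(3) by blast
qed

lemma G5:
  assumes d12: "gdom A D s v1 v2" and d21: "gdom A D s v2 v1"
  shows "\<not> (gp A D P \<and> hd P = s \<and> last P = v2)"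
proof (induction "length P" arbitrary: P rule: less_induct)
  case less
  show ?case
  proof
    assume P: "gp A D P \<and> hd P = s \<and> last P = v2"
    have "v1 \<in> set P" using P d12 unfolding gdom_def by blast
    then obtain k where k: "k < length P" "P ! k = v1" by (metis in_set_conv_nth)
    note T = G3[OF conjunct1[OF P] k(1)]
    have "v2 \<in> set (take (Suc k) P)" using d21 T P k unfolding gdom_def by auto
    then obtain m where m: "m < length (take (Suc k) P)" "take (Suc k) P ! m = v2"
      by (metis in_set_conv_nth)
    have mk: "m \<le> k" "P ! m = v2" using m k by auto
    have "m \<noteq> k" using mk k d12 unfolding gdom_def by auto
    hence mk2: "m < k" using mk by simp
    note T2 = G3[OF conjunct1[OF P], of m]
    have "length (take (Suc m) P) < length P" using mk2 k by simp
    moreover have "gp A D (take (Suc m) P) \<and> hd (take (Suc m) P) = s \<and> last (take (Suc m) P) = v2"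
      using T2 mk2 k P mk by auto
    ultimately show False using less by blast
  qed
qed

lemma G6:
  assumes P: "gp A D P" "hd P = s" "last P = x" and k: "Suc k < length P" "P ! k = v"
    and u: "u \<notin> set (drop (Suc k) P)" "u \<noteq> v" "gdom A D s u x"
  shows "gdom A D s u v"
  unfolding gdom_def
proof (intro conjI allI impI)
  show "u \<noteq> v" by fact
  fix Q assume Q: "gp A D Q \<and> hd Q = s \<and> last Q = v"
  show "u \<in> set Q"
  proof (rule ccontr)
    assume nu: "u \<notin> set Q"
    note R = G3(4-6)[OF P(1), of k]
    have Rk: "gp A D (drop k P)" "hd (drop k P) = v" "last (drop k P) = x" using R k P by auto
    note W = G4[OF conjunct1[OF Q] Rk(1)]
    have "u \<in> set (Q @ tl (drop k P))"
      using u(3) W Q Rk unfolding gdom_def by auto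
    moreover have "tl (drop k P) = drop (Suc k) P" by (simp add: drop_Suc tl_drop)
    ultimately show False using nu u(1) by auto
  qed
qed

lemma gdom_start:
  assumes "s \<noteq> x" shows "gdom A D s s x"
  using assms unfolding gdom_def gp_def by (metis list.set_sel(1))

lemma G7:
  assumes P: "gp A D P" "hd P = s" "last P = x" and xs: "x \<noteq> s"
  shows "\<exists>v. gdom A D s v x \<and> (\<forall>u. gdom A D s u x \<and> u \<noteq> v \<longrightarrow> gdom A D s u v)"
proof -
  define K where "K = {i. i < length P \<and> gdom A D s (P ! i) x}"
  have Pne: "P \<noteq> []" using P unfolding gp_def by simp
  have "0 \<in> K" unfolding K_def using Pne P xs gdom_start[of s x A D] by (simp add: hd_conv_nth)
  moreover have fK: "finite K" unfolding K_def by simp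
  ultimately have kK: "Max K \<in> K" and kmax: "\<And>j. j \<in> K \<Longrightarrow> j \<le> Max K"
    using Max_in[OF fK] Max_ge[OF fK] by blast+
  define k where "k = Max K"
  define v where "v = P ! k"
  have kl: "k < length P" and dv: "gdom A D s v x" using kK unfolding K_def k_def v_def by auto
  have "k \<noteq> length P - 1"
  proof
    assume "k = length P - 1"
    hence "v = x" unfolding v_def using P Pne by (simp add: last_conv_nth)
    thus False using dv unfolding gdom_def by simp
  qed
  hence sk: "Suc k < length P" using kl by simp
  show ?thesis
  proof (intro exI conjI allI impI)
    show "gdom A D s v x" by fact
    fix u assume u: "gdom A D s u x \<and> u \<noteq> v"
    have "u \<notin> set (drop (Suc k) P)"
    proof
      assume "u \<in> set (drop (Suc k) P)"
      then obtain j where j: "j < length (drop (Suc k) P)" "drop (Suc k) P ! j = u"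
        by (metis in_set_conv_nth)
      hence "Suc k + j \<in> K" unfolding K_def using u by auto
      hence "Suc k + j \<le> k" using kmax unfolding k_def by blast
      thus False by simp
    qed
    thus "gdom A D s u v" using G6[OF P sk v_def[symmetric]] u by blast
  qed
qed

lemma G8:
  assumes P: "gp A D P" "hd P = s" "last P = x" and xs: "x \<noteq> s"
  defines "I \<equiv> THE v. gdom A D s v x \<and> (\<forall>u. gdom A D s u x \<and> u \<noteq> v \<longrightarrow> gdom A D s u v)"
  shows "gdom A D s I x \<and> (\<forall>u. gdom A D s u x \<and> u \<noteq> I \<longrightarrow> gdom A D s u I)"
  unfolding I_def
proof (rule theI')
  obtain v where v: "gdom A D s v x \<and> (\<forall>u. gdom A D s u x \<and> u \<noteq> v \<longrightarrow> gdom A D s u v)"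
    using G7[OF P xs] by blast
  show "\<exists>!v. gdom A D s v x \<and> (\<forall>u. gdom A D s u x \<and> u \<noteq> v \<longrightarrow> gdom A D s u v)"
  proof (rule ex1I[of _ v])
    show "gdom A D s v x \<and> (\<forall>u. gdom A D s u x \<and> u \<noteq> v \<longrightarrow> gdom A D s u v)" by fact
    fix v2 assume v2: "gdom A D s v2 x \<and> (\<forall>u. gdom A D s u x \<and> u \<noteq> v2 \<longrightarrow> gdom A D s u v2)"
    show "v2 = v"
    proof (rule ccontr)
      assume ne: "v2 \<noteq> v"
      have d1: "gdom A D s v2 v" using v v2 ne by blast
      have d2: "gdom A D s v v2" using v v2 ne by blast
      obtain P' where "gp A D P'" "hd P' = s" "last P' = v2"
        using gdom_reach[OF _ P] v2 by blast
      thus False using G5[OF d2 d1] by blast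
    qed
  qed
qed

lemma prefix_not_less:
  assumes pos: "\<forall>e\<in>E. w e > 0"
    and P: "shortest_path V E w s t xs" and Q: "shortest_path V E w s t ys"
    and i: "i < length xs" and j: "j < length ys" and eq: "xs ! i = ys ! j"
  shows "\<not> wl w (take (Suc i) xs) < wl w (take (Suc j) ys)"
proof
  assume lt: "wl w (take (Suc i) xs) < wl w (take (Suc j) ys)"
  have px: "is_path V E xs" "hd xs = s" "last xs = t" and py: "is_path V E ys" "hd ys = s" "last ys = t"
    and opt: "\<And>zs. is_path V E zs \<Longrightarrow> hd zs = s \<Longrightarrow> last zs = t \<Longrightarrow> path_len w ys \<le> path_len w zs"
    using P Q unfolding shortest_path_def by auto
  define W where "W = take i xs @ ys ! j # drop (Suc j) ys"
  have tx: "take (Suc i) xs = take i xs @ [ys ! j]" using i eq by (simp add: take_Suc_conv_app_nth)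
  have dy: "drop j ys = ys ! j # drop (Suc j) ys" using j by (simp add: Cons_nth_drop_Suc)
  have ty: "take (Suc j) ys = take j ys @ [ys ! j]" using j by (simp add: take_Suc_conv_app_nth)
  have W2: "W = take (Suc i) xs @ drop (Suc j) ys" unfolding W_def tx by simp
  have W3: "W = take i xs @ drop j ys" unfolding W_def dy by simp
  have ys2: "ys = take j ys @ ys ! j # drop (Suc j) ys" using dy by (metis append_take_drop_id)
  have wW: "wl w W = wl w (take (Suc i) xs) + wl w (ys ! j # drop (Suc j) ys)"
  proof -
    have "wl w W = wl w (take i xs @ [ys ! j]) + wl w (ys ! j # drop (Suc j) ys)"
      unfolding W_def by (rule wl_append)
    thus ?thesis by (simp only: tx)
  qed
  have wY: "wl w ys = wl w (take (Suc j) ys) + wl w (ys ! j # drop (Suc j) ys)"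
  proof -
    have "wl w ys = wl w (take j ys @ [ys ! j]) + wl w (ys ! j # drop (Suc j) ys)"
      using wl_append[of w "take j ys" "ys ! j" "drop (Suc j) ys"] ys2 by metis
    thus ?thesis by (simp only: ty)
  qed
  have sx: "successively (\<lambda>a b. {a,b} \<in> E) (take i xs @ [ys ! j])"
    using succ_take[OF path_succ[OF px(1)], of "Suc i"] tx by simp
  have sy: "successively (\<lambda>a b. {a,b} \<in> E) (ys ! j # drop (Suc j) ys)"
    using succ_drop[OF path_succ[OF py(1)], of j] dy by simp
  have sW: "successively (\<lambda>a b. {a,b} \<in> E) W" unfolding W_def using succ_join[OF sx sy] .
  have setW: "set W \<subseteq> V"
  proof -
    have "set xs \<subseteq> V" "set ys \<subseteq> V" using px(1) py(1) unfolding is_path_def by auto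
    moreover have "set W \<subseteq> set xs \<union> set ys" unfolding W3
      using set_take_subset[of i xs] set_drop_subset[of j ys] by auto
    ultimately show ?thesis by blast
  qed
  have hdW: "hd W = s" unfolding W2 using px i by (cases xs) auto
  have lastW: "last W = t" unfolding W3 using py j by simp
  obtain zs where zs: "is_path V E zs" "hd zs = hd W" "last zs = last W" "wl w zs \<le> wl w W"
  proof -
    have "W \<noteq> []" unfolding W_def by simp
    from shortcut[OF pos this setW sW] show ?thesis using that by blast
  qed
  have "path_len w ys \<le> path_len w zs" using opt zs hdW lastW by simp
  thus False using zs(4) wW wY lt by (simp add: path_len_wl)
qed

lemma prefix_eq:
  assumes pos: "\<forall>e\<in>E. w e > 0"
    and P: "shortest_path V E w s t xs" and Q: "shortest_path V E w s t ys"
    and i: "i < length xs" and j: "j < length ys" and eq: "xs ! i = ys ! j"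
  shows "wl w (take (Suc i) xs) = wl w (take (Suc j) ys)"
  using prefix_not_less[OF pos P Q i j eq] prefix_not_less[OF pos Q P j i eq[symmetric]] by linarith

definition phi :: "'a set \<Rightarrow> 'a set set \<Rightarrow> ('a set \<Rightarrow> real) \<Rightarrow> 'a \<Rightarrow> 'a \<Rightarrow> 'a \<Rightarrow> real" where
  "phi V E w s t u = (SOME v. \<exists>xs i. shortest_path V E w s t xs \<and> i < length xs \<and> xs ! i = u \<and>
      v = wl w (take (Suc i) xs))"

lemma phi_eq:
  assumes pos: "\<forall>e\<in>E. w e > 0" and P: "shortest_path V E w s t xs" and i: "i < length xs"
  shows "phi V E w s t (xs ! i) = wl w (take (Suc i) xs)"
proof -
  let ?Q = "\<lambda>v. \<exists>ys j. shortest_path V E w s t ys \<and> j < length ys \<and> ys ! j = xs ! i \<and>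
      v = wl w (take (Suc j) ys)"
  have "?Q (wl w (take (Suc i) xs))" using P i by blast
  hence "?Q (phi V E w s t (xs ! i))" unfolding phi_def by (rule someI)
  then obtain ys j where "shortest_path V E w s t ys" "j < length ys" "ys ! j = xs ! i"
    "phi V E w s t (xs ! i) = wl w (take (Suc j) ys)" by blast
  thus ?thesis using prefix_eq[OF pos P _ i, of ys j] by simp
qed

lemma arc_phi:
  assumes pos: "\<forall>e\<in>E. w e > 0" and a: "(u, v) \<in> Darcs V E w s t"
  shows "phi V E w s t u < phi V E w s t v \<and> 0 \<le> phi V E w s t u"
proof -
  obtain xs i where xs: "shortest_path V E w s t xs" "Suc i < length xs" "u = xs ! i" "v = xs ! Suc i"
    using a unfolding Darcs_def by blast
  have pth: "is_path V E xs" using xs unfolding shortest_path_def by simp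
  have e: "{xs ! i, xs ! Suc i} \<in> E" using pth xs(2) unfolding is_path_def by blast
  have t1: "take (Suc i) xs = take i xs @ [xs ! i]" using xs(2) by (simp add: take_Suc_conv_app_nth)
  have t2: "take (Suc (Suc i)) xs = take i xs @ xs ! i # [xs ! Suc i]"
    using xs(2) t1 by (simp add: take_Suc_conv_app_nth)
  have "wl w (take (Suc (Suc i)) xs) = wl w (take i xs @ [xs ! i]) + wl w [xs ! i, xs ! Suc i]"
    unfolding t2 by (rule wl_append)
  hence "wl w (take (Suc (Suc i)) xs) = wl w (take (Suc i) xs) + w {xs ! i, xs ! Suc i}"
    using t1 by simp
  moreover have "phi V E w s t u = wl w (take (Suc i) xs)" using phi_eq[OF pos xs(1), of i] xs by simp
  moreover have "phi V E w s t v = wl w (take (Suc (Suc i)) xs)" using phi_eq[OF pos xs(1), of "Suc i"] xs by simp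
  moreover have "w {xs ! i, xs ! Suc i} > 0" using pos e by blast
  moreover have "wl w (take (Suc i) xs) \<ge> 0"
    using wl_nonneg[OF pos succ_take[OF path_succ[OF pth]]] .
  ultimately show ?thesis by simp
qed

lemma trancl_phi:
  assumes pos: "\<forall>e\<in>E. w e > 0" and a: "(u, v) \<in> (Darcs V E w s t)\<^sup>+"
  shows "phi V E w s t u < phi V E w s t v \<and> 0 < phi V E w s t v"
  using a
proof (induction rule: trancl_induct)
  case (base y) then show ?case using arc_phi[OF pos] by fastforce
next
  case (step y z) then show ?case using arc_phi[OF pos step(2)] by linarith
qed

lemma phi_s:
  assumes pos: "\<forall>e\<in>E. w e > 0" and P: "shortest_path V E w s t xs"
  shows "phi V E w s t s = 0"
proof -
  have ne: "xs \<noteq> []" "hd xs = s" using P unfolding shortest_path_def is_path_def by auto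
  hence "xs ! 0 = s" by (simp add: hd_conv_nth)
  moreover have "take (Suc 0) xs = [xs ! 0]" using ne by (cases xs) auto
  ultimately show ?thesis using phi_eq[OF pos P, of 0] ne by simp
qed

lemma trancl_not_s:
  assumes pos: "\<forall>e\<in>E. w e > 0" and a: "(u, v) \<in> (Darcs V E w s t)\<^sup>+"
  shows "v \<noteq> s"
proof -
  obtain z where "(z, v) \<in> Darcs V E w s t" using a by (meson tranclE)
  then obtain xs where "shortest_path V E w s t xs" unfolding Darcs_def by blast
  thus ?thesis using phi_s[OF pos] trancl_phi[OF pos a] by force
qed

lemma Darcs_sub: "Darcs V E w s t \<subseteq> DV V E w s t \<times> DV V E w s t"
  unfolding Darcs_def DV_def by auto

lemma dpath_gp: "dpath V E w s t = gp (Darcs V E w s t) (DV V E w s t)"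
  by (rule ext) (simp add: dpath_def gp_def succ_nth)

lemma sdom_gdom: "sdom V E w s t = gdom (Darcs V E w s t) (DV V E w s t) s"
  by (intro ext) (simp add: sdom_def gdom_def dpath_gp)

lemma DV_reach:
  assumes "x \<in> DV V E w s t"
  shows "\<exists>P. gp (Darcs V E w s t) (DV V E w s t) P \<and> hd P = s \<and> last P = x"
proof -
  obtain xs where xs: "shortest_path V E w s t xs" "x \<in> set xs" using assms unfolding DV_def by blast
  then obtain i where i: "i < length xs" "xs ! i = x" by (metis in_set_conv_nth)
  have "gp (Darcs V E w s t) (DV V E w s t) xs"
    unfolding gp_def succ_nth
  proof (intro conjI allI impI)
    show "xs \<noteq> []" using xs(2) by auto
    show "set xs \<subseteq> DV V E w s t" using xs(1) unfolding DV_def by blast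
    fix k assume "Suc k < length xs"
    thus "(xs ! k, xs ! Suc k) \<in> Darcs V E w s t" using xs(1) unfolding Darcs_def by blast
  qed
  moreover have "hd xs = s" using xs(1) unfolding shortest_path_def by simp
  ultimately show ?thesis using G3(1-3)[of _ _ xs i] i by metis
qed

theorem lemma3:
  fixes V :: "'a set" and E :: "'a set set" and w :: "'a set \<Rightarrow> real" and s t x y :: 'a
  assumes "simple_graph V E"
    and "connected_graph V E"
    and "\<forall>e\<in>E. w e > 0"
    and "s \<in> V" and "t \<in> V"
    and "x \<in> DV V E w s t" and "x \<noteq> s"
    and "y \<in> Cset V E w s t x"
  shows "anc_eq V E w s t (Is V E w s t x) (Is V E w s t y)"
proof -
  note pos = assms(3)
  define A where "A = Darcs V E w s t"
  define D where "D = DV V E w s t"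
  have IsG: "Is V E w s t z = (THE v. gdom A D s v z \<and> (\<forall>u. gdom A D s u z \<and> u \<noteq> v \<longrightarrow> gdom A D s u v))" for z
    unfolding Is_def sdom_gdom A_def D_def ..
  define a where "a = Is V E w s t x"
  define b where "b = Is V E w s t y"
  obtain Px where Px: "gp A D Px" "hd Px = s" "last Px = x" using DV_reach[OF assms(6)] A_def D_def by blast
  have Ia: "gdom A D s a x \<and> (\<forall>u. gdom A D s u x \<and> u \<noteq> a \<longrightarrow> gdom A D s u a)"
    unfolding a_def IsG using G8[OF Px assms(7)] by blast
  have y: "y \<in> D" "(a, y) \<in> A\<^sup>+" "(y, x) \<in> A\<^sup>+"
    using assms(8) unfolding Cset_def anc_def a_def A_def D_def by auto
  have ys: "y \<noteq> s" using trancl_not_s[OF pos] y(2) unfolding A_def by blast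
  have ay: "a \<noteq> y" using trancl_phi[OF pos] y(2) unfolding A_def by fastforce
  have dy: "gdom A D s a y"
    unfolding gdom_def
  proof (intro conjI allI impI)
    show "a \<noteq> y" by fact
    fix Q assume Q: "gp A D Q \<and> hd Q = s \<and> last Q = y"
    show "a \<in> set Q"
    proof (rule ccontr)
      assume na: "a \<notin> set Q"
      obtain R where R: "gp A D R" "hd R = y" "last R = x" "length R \<ge> 2"
      proof -
        have "A \<subseteq> D \<times> D" using Darcs_sub unfolding A_def D_def .
        from G1[OF y(3) this] show ?thesis using that by blast
      qed
      have lqr: "last Q = hd R" using Q R by simp
      note W = G4[OF conjunct1[OF Q] R(1) lqr]
      have "gp A D (Q @ tl R) \<and> hd (Q @ tl R) = s \<and> last (Q @ tl R) = x" using W Q R by simp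
      hence "a \<in> set (Q @ tl R)" using Ia unfolding gdom_def by blast
      hence "a \<in> set (tl R)" using na by simp
      then obtain j where j: "j < length (tl R)" "tl R ! j = a" by (metis in_set_conv_nth)
      have Rne: "R \<noteq> []" using R by auto
      have "R ! Suc j = a" using j Rne by (simp add: nth_tl)
      moreover have "R ! 0 = y" using R Rne by (simp add: hd_conv_nth)
      ultimately have "(y, a) \<in> A\<^sup>+" using G2[OF R(1), of 0 "Suc j"] j by simp
      hence "(a, a) \<in> A\<^sup>+" using y(2) by simp
      thus False using trancl_phi[OF pos, of a a] unfolding A_def by simp
    qed
  qed
  obtain Py where Py: "gp A D Py" "hd Py = s" "last Py = y" using DV_reach[of y V E w s t] y(1) unfolding A_def D_def by blast
  have Ib: "gdom A D s b y \<and> (\<forall>u. gdom A D s u y \<and> u \<noteq> b \<longrightarrow> gdom A D s u b)"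
    unfolding b_def IsG using G8[OF Py ys] by blast
  show ?thesis
  proof (cases "a = b")
    case True then show ?thesis unfolding anc_eq_def a_def b_def by simp
  next
    case False
    hence dab: "gdom A D s a b" using Ib dy by blast
    obtain Pb where Pb: "gp A D Pb" "hd Pb = s" "last Pb = b" using gdom_reach[OF _ Py] Ib by blast
    have "a \<in> set Pb" using dab Pb unfolding gdom_def by blast
    then obtain i where i: "i < length Pb" "Pb ! i = a" by (metis in_set_conv_nth)
    have Pbne: "Pb \<noteq> []" using Pb unfolding gp_def by simp
    have L: "Pb ! (length Pb - 1) = b" using Pb Pbne by (simp add: last_conv_nth)
    have "i \<noteq> length Pb - 1" using L i False by auto
    hence "i < length Pb - 1" using i by simp
    hence "(a, b) \<in> A\<^sup>+" using G2[OF Pb(1), of i "length Pb - 1"] i L Pbne by simp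
    thus ?thesis unfolding anc_eq_def anc_def a_def b_def A_def by simp
  qed
qed

end
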